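(* Let $G$ be a maximal twelve tone subgroup of $S_{11}$ of signature $(n_1,\dots,n_d)$ with or without crossings, acting on $\mathcal{T}_7$. Then the multiset of sizes of the $G$-orbits of $\mathcal{T}_7$ is the multiset $$\left\{\binom{n_1}{k_1}\binom{n_2}{k_2}\cdots\binom{n_d}{k_d} : k_1,\dots,k_d\in\mathbb{Z}_{\ge 0},\ k_1+\cdots+k_d=6,\ k_i\le n_i \text{ for all } i\right\}$$ (one orbit for each such tuple $(k_1,\dots,k_d)$). Consequently, for all real $t\neq 0$, $$\mathrm{orb}_t(G,\mathcal{T}_7)=\left(\frac{1}{462}\sum \left(\binom{n_1}{k_1}\cdots\binom{n_d}{k_d}\right)^{t+1}\right)^{1/t},$$ the maximal $G$-orbits of $\mathcal{T}_7$ have size $\mathrm{orb}_\infty(G,\mathcal{T}_7)=\max \binom{n_1}{k_1}\cdots\binom{n_d}{k_d}$, and $\mathrm{diam}_t(G,\mathcal{T}_7)=\mathrm{orb}_\infty(G,\mathcal{T}_7)/\mathrm{orb}_t(G,\mathcal{T}_7)$; moreover $462=\binom{11}{6}=\sum \binom{n_1}{k_1}\cdots\binom{n_d}{k_d}$, and the number of $G$-orbits of $\mathcal{T}_7$ equals the number of such tuples $(k_1,\dots,k_d)$. Here all sums and the maximum range over tuples $(k_1,\dots,k_d)$ of nonnegative integers with $k_1+\cdots+k_d=6$ and $k_i\le n_i$ for all $i$.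
   Context: Let $\mathbb{Z}_{12}=\{0,\dots,11\}$ and let $\mathcal{T}_7$ be the set of $7$-element subsets of $\mathbb{Z}_{12}$ containing $0$ ($|\mathcal{T}_7|=462$). $S_{11}$ is the group of permutations of $\{1,\dots,11\}$, extended by $\sigma(0)=0$, acting on $\mathcal{T}_7$ by $\sigma\cdot s=\{\sigma(x):x\in s\}$. For positive integers $n_1+\cdots+n_d=11$, $S_{n_1,\dots,n_d}$ denotes the image of $S_{n_1}\times\cdots\times S_{n_d}\to S_{11}$ where the $i$-th factor permutes the consecutive block $\{n_1+\cdots+n_{i-1}+1,\dots,n_1+\cdots+n_i\}$; a maximal twelve tone group of signature $(n_1,\dots,n_d)$ with or without crossings is any conjugate $\tau S_{n_1,\dots,n_d}\tau^{-1}$, $\tau\in S_{11}$. For a group acting on a finite set $S$: $\mathrm{orb}_t(G,S)=\left(\frac{1}{|S|}\sum_{s\in S}|Gs|^t\right)^{1/t}$ for real $t\ne0$, $\mathrm{orb}_\infty(G,S)=\max_s|Gs|$, and $\mathrm{diam}_t(G,S)=\mathrm{orb}_\infty(G,S)/\mathrm{orb}_t(G,S)$. *)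

theory Defs
  imports Complex_Main "HOL-Library.Multiset" "HOL-Combinatorics.Permutations"
begin

text \<open>Z_12 is modelled as the naturals 0..11. Permutations of {1..11}, extended by
  sigma(0) = 0, are functions nat => nat permuting {1..11} (identity elsewhere).\<close>

definition T7 :: "nat set set" where
  "T7 = {s. s \<subseteq> {0..<12} \<and> 0 \<in> s \<and> card s = 7}"

definition S11 :: "(nat \<Rightarrow> nat) set" where
  "S11 = {\<sigma>. \<sigma> permutes {1..11}}"

definition block :: "nat list \<Rightarrow> nat \<Rightarrow> nat set" where
  "block ns i = {sum_list (take i ns) + 1 .. sum_list (take i ns) + ns ! i}"

text \<open>Image of S_{n_1} x ... x S_{n_d} in S_11.\<close>
definition young :: "nat list \<Rightarrow> (nat \<Rightarrow> nat) set" where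
  "young ns = {\<sigma> \<in> S11. \<forall>i < length ns. \<sigma> ` block ns i = block ns i}"

definition conj_grp :: "(nat \<Rightarrow> nat) \<Rightarrow> (nat \<Rightarrow> nat) set \<Rightarrow> (nat \<Rightarrow> nat) set" where
  "conj_grp \<tau> H = {\<tau> \<circ> \<sigma> \<circ> inv \<tau> | \<sigma>. \<sigma> \<in> H}"

definition max_tt_group :: "nat list \<Rightarrow> (nat \<Rightarrow> nat) set \<Rightarrow> bool" where
  "max_tt_group ns G \<longleftrightarrow> (\<exists>\<tau> \<in> S11. G = conj_grp \<tau> (young ns))"

definition set_act :: "(nat \<Rightarrow> nat) \<Rightarrow> nat set \<Rightarrow> nat set" where
  "set_act \<sigma> s = \<sigma> ` s"

definition orbit :: "('g \<Rightarrow> 'x \<Rightarrow> 'x) \<Rightarrow> 'g set \<Rightarrow> 'x \<Rightarrow> 'x set" where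
  "orbit act G x = (\<lambda>g. act g x) ` G"

definition orbits :: "('g \<Rightarrow> 'x \<Rightarrow> 'x) \<Rightarrow> 'g set \<Rightarrow> 'x set \<Rightarrow> 'x set set" where
  "orbits act G S = orbit act G ` S"

definition orb_t :: "('g \<Rightarrow> 'x \<Rightarrow> 'x) \<Rightarrow> 'g set \<Rightarrow> 'x set \<Rightarrow> real \<Rightarrow> real" where
  "orb_t act G S t =
     ((1 / real (card S)) * (\<Sum>s\<in>S. real (card (orbit act G s)) powr t)) powr (1 / t)"

definition orb_inf :: "('g \<Rightarrow> 'x \<Rightarrow> 'x) \<Rightarrow> 'g set \<Rightarrow> 'x set \<Rightarrow> nat" where
  "orb_inf act G S = Max ((\<lambda>s. card (orbit act G s)) ` S)"

definition diam_t :: "('g \<Rightarrow> 'x \<Rightarrow> 'x) \<Rightarrow> 'g set \<Rightarrow> 'x set \<Rightarrow> real \<Rightarrow> real" where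
  "diam_t act G S t = real (orb_inf act G S) / orb_t act G S t"

definition tuples :: "nat list \<Rightarrow> nat list set" where
  "tuples ns = {ks. length ks = length ns \<and> sum_list ks = 6 \<and> (\<forall>i < length ns. ks ! i \<le> ns ! i)}"

definition binprod :: "nat list \<Rightarrow> nat list \<Rightarrow> nat" where
  "binprod ns ks = (\<Prod>i<length ns. ns ! i choose ks ! i)"

end

theory Submission
  imports Defs
begin

lemma sum_take_mono: "m \<le> n \<Longrightarrow> sum_list (take m (xs::nat list)) \<le> sum_list (take n xs)"
proof -
  assume "m \<le> n"
  then have "take n xs = take m xs @ take (n - m) (drop m xs)"
    by (metis le_add_diff_inverse take_add)
  then show ?thesis by simp
qed

lemma block_disj:
  assumes "i < length ns" "j < length ns" "i \<noteq> j"
  shows "block ns i \<inter> block ns j = {}"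
proof -
  have aux: "block ns i \<inter> block ns j = {}" if "i < j" "j < length ns" for i j
  proof -
    have "sum_list (take i ns) + ns ! i = sum_list (take (Suc i) ns)"
      using that by (simp add: take_Suc_conv_app_nth)
    also have "\<dots> \<le> sum_list (take j ns)" using that by (intro sum_take_mono) simp
    finally show ?thesis unfolding block_def by auto
  qed
  show ?thesis using assms aux[of i j] aux[of j i] by (cases "i < j") (auto simp: Int_commute)
qed

lemma block_union: "(\<Union>i<length ns. block ns i) = {1..sum_list ns}"
proof (induction ns rule: rev_induct)
  case Nil
  then show ?case by simp
next
  case (snoc x xs)
  have "(\<Union>i<length (xs @ [x]). block (xs @ [x]) i)
      = (\<Union>i<length xs. block (xs @ [x]) i) \<union> block (xs @ [x]) (length xs)"
    by (simp add: lessThan_Suc Un_commute)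
  also have "(\<Union>i<length xs. block (xs @ [x]) i) = (\<Union>i<length xs. block xs i)"
    by (intro SUP_cong refl) (simp add: block_def nth_append)
  also have "block (xs @ [x]) (length xs) = {sum_list xs + 1 .. sum_list xs + x}"
    by (simp add: block_def)
  finally show ?case using snoc by auto
qed

lemma card_block: "card (block ns i) = ns ! i"
  by (simp add: block_def)

lemma perm_extend:
  assumes "finite S" "A \<subseteq> S" "C \<subseteq> S" "card A = card C"
  shows "\<exists>p. p permutes S \<and> p ` A = C"
proof -
  have fA: "finite A" "finite C" using assms finite_subset by auto
  obtain f where f: "bij_betw f A C" using fA assms(4) by (metis finite_same_card_bij)
  have "card (S - A) = card (S - C)"
    using assms fA by (simp add: card_Diff_subset)
  then obtain g where g: "bij_betw g (S - A) (S - C)"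
    using assms by (metis finite_Diff finite_same_card_bij)
  define p where "p x = (if x \<in> A then f x else if x \<in> S then g x else x)" for x
  have pA: "p ` A = C" using f unfolding p_def bij_betw_def by auto
  have pSA: "p ` (S - A) = S - C" using g unfolding p_def bij_betw_def by auto
  have "p ` S = S" using pA pSA assms
    by (metis Diff_partition image_Un)
  moreover have "inj_on p S"
  proof (rule inj_onI)
    fix x y assume xy: "x \<in> S" "y \<in> S" "p x = p y"
    show "x = y"
    proof (cases "x \<in> A"; cases "y \<in> A")
      assume "x \<in> A" "y \<in> A" then show ?thesis using xy f unfolding p_def bij_betw_def inj_on_def by auto
    next
      assume "x \<notin> A" "y \<notin> A" then show ?thesis using xy g unfolding p_def bij_betw_def inj_on_def by auto
    next
      assume a: "x \<in> A" "y \<notin> A"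
      then have "p x \<in> C" "p y \<in> S - C" using pA pSA xy by auto
      then show ?thesis using xy by auto
    next
      assume a: "x \<notin> A" "y \<in> A"
      then have "p y \<in> C" "p x \<in> S - C" using pA pSA xy by auto
      then show ?thesis using xy by auto
    qed
  qed
  ultimately have "bij_betw p S S" by (simp add: bij_betw_def)
  moreover have "\<And>x. x \<notin> S \<Longrightarrow> p x = x" using assms unfolding p_def by auto
  ultimately have "p permutes S" by (rule bij_imp_permutes)
  then show ?thesis using pA by blast
qed

locale part =
  fixes d :: nat and B :: "nat \<Rightarrow> nat set"
  assumes disj: "\<And>i j. i < d \<Longrightarrow> j < d \<Longrightarrow> i \<noteq> j \<Longrightarrow> B i \<inter> B j = {}"
    and cover: "(\<Union>i<d. B i) = {1..11}"
begin

definition H where "H = {\<sigma>. \<sigma> permutes {1..11} \<and> (\<forall>i<d. \<sigma> ` B i = B i)}"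
definition cnt where "cnt t = map (\<lambda>i. card (t \<inter> B i)) [0..<d]"
definition tup where "tup = {ks. length ks = d \<and> sum_list ks = 6 \<and> (\<forall>i<d. ks ! i \<le> card (B i))}"
definition bp where "bp ks = (\<Prod>i<d. card (B i) choose ks ! i)"
definition fib where "fib ks = {t \<in> T7. cnt t = ks}"

lemma B_sub: "i < d \<Longrightarrow> B i \<subseteq> {1..11}" using cover by blast
lemma B_fin: "i < d \<Longrightarrow> finite (B i)" using B_sub finite_subset by blast
lemma zero_notin: "i < d \<Longrightarrow> 0 \<notin> B i" using B_sub by fastforce

lemma decomp:
  assumes "u \<subseteq> {0..<12}" "0 \<in> u"
  shows "u = insert 0 (\<Union>i<d. u \<inter> B i)"
proof -
  have "{0..<12} = insert (0::nat) {1..11}" by auto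
  then show ?thesis using assms cover by blast
qed

lemma build:
  assumes "\<And>i. i < d \<Longrightarrow> F i \<subseteq> B i"
  defines "u \<equiv> insert 0 (\<Union>i<d. F i)"
  shows "u \<subseteq> {0..<12}" "0 \<in> u" "\<And>j. j < d \<Longrightarrow> u \<inter> B j = F j"
    and "card u = 1 + (\<Sum>i<d. card (F i))"
proof -
  show "u \<subseteq> {0..<12}" using assms B_sub unfolding u_def by fastforce
  show "0 \<in> u" unfolding u_def by simp
  show "u \<inter> B j = F j" if "j < d" for j
  proof -
    have "(\<Union>i<d. F i) \<inter> B j = F j"
    proof safe
      fix x i assume "i < d" "x \<in> F i" "x \<in> B j"
      then show "x \<in> F j" using disj[of i j] assms(1)[of i] that by (cases "i = j") auto
    next
      fix x assume "x \<in> F j" then show "x \<in> (\<Union>i<d. F i)" using that by blast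
    next
      fix x assume "x \<in> F j" then show "x \<in> B j" using that assms(1) by blast
    qed
    then show ?thesis unfolding u_def using zero_notin[OF that] by auto
  qed
  have fin: "finite (F i)" if "i < d" for i using assms(1) B_fin that finite_subset by blast
  have "card (\<Union>i<d. F i) = (\<Sum>i<d. card (F i))"
    apply (rule card_UN_disjoint)
    using fin apply auto[2]
    using disj assms(1) by blast
  moreover have "0 \<notin> (\<Union>i<d. F i)" using assms(1) zero_notin by blast
  moreover have "finite (\<Union>i<d. F i)" using fin by blast
  ultimately show "card u = 1 + (\<Sum>i<d. card (F i))" unfolding u_def by simp
qed

lemma card_decomp:
  assumes "u \<subseteq> {0..<12}" "0 \<in> u"
  shows "card u = 1 + (\<Sum>i<d. card (u \<inter> B i))"
proof -
  have "card (insert 0 (\<Union>i<d. u \<inter> B i)) = 1 + (\<Sum>i<d. card (u \<inter> B i))"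
    by (rule build(4)) auto
  then show ?thesis using decomp[OF assms] by simp
qed

lemma sum_cnt: "sum_list (cnt t) = (\<Sum>i<d. card (t \<inter> B i))"
  unfolding cnt_def by (simp add: sum_list_sum_nth atLeast0LessThan)

lemma cnt_eq: "cnt t = cnt u \<longleftrightarrow> (\<forall>i<d. card (t \<inter> B i) = card (u \<inter> B i))"
  unfolding cnt_def by (auto simp: list_eq_iff_nth_eq)

lemma cnt_image: "cnt ` T7 = tup"
proof safe
  fix t assume t: "t \<in> T7"
  then have "card t = 1 + (\<Sum>i<d. card (t \<inter> B i))" by (intro card_decomp) (auto simp: T7_def)
  then have "sum_list (cnt t) = 6" using t by (simp add: sum_cnt T7_def)
  moreover have "\<forall>i<d. cnt t ! i \<le> card (B i)"
    using B_fin by (auto simp: cnt_def intro!: card_mono)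
  ultimately show "cnt t \<in> tup" by (simp add: tup_def cnt_def)
next
  fix ks assume ks: "ks \<in> tup"
  have "\<forall>i<d. \<exists>X. X \<subseteq> B i \<and> card X = ks ! i"
  proof safe
    fix i assume "i < d"
    then have "ks ! i \<le> card (B i)" using ks by (simp add: tup_def)
    then show "\<exists>X. X \<subseteq> B i \<and> card X = ks ! i" by (metis obtain_subset_with_card_n)
  qed
  then obtain F where F: "\<And>i. i < d \<Longrightarrow> F i \<subseteq> B i \<and> card (F i) = ks ! i" by metis
  define u where "u = insert 0 (\<Union>i<d. F i)"
  note b = build[of F, folded u_def, OF conjunct1[OF F]]
  have "cnt u = ks" using ks b(3) F unfolding cnt_def tup_def
    by (auto simp: list_eq_iff_nth_eq)
  moreover have "card u = 7"
  proof -
    have "(\<Sum>i<d. card (F i)) = (\<Sum>i<d. ks ! i)" using F by simp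
    also have "\<dots> = sum_list ks" using ks by (simp add: tup_def sum_list_sum_nth atLeast0LessThan)
    finally show ?thesis using b(4) ks by (simp add: tup_def)
  qed
  ultimately show "ks \<in> cnt ` T7" using b(1,2) by (auto simp: T7_def)
qed


lemma orbit_char:
  assumes s: "s \<in> T7"
  shows "orbit set_act H s = fib (cnt s)"
proof safe
  fix t assume "t \<in> orbit set_act H s"
  then obtain \<sigma> where \<sigma>: "\<sigma> \<in> H" and t: "t = \<sigma> ` s" by (auto simp: orbit_def set_act_def)
  have p: "\<sigma> permutes {1..11}" and pB: "\<And>i. i < d \<Longrightarrow> \<sigma> ` B i = B i" using \<sigma> by (auto simp: H_def)
  have inj: "inj \<sigma>" using p permutes_inj by blast
  have "\<sigma> 0 = 0" using p by (simp add: permutes_not_in)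
  have "\<sigma> x \<in> {0..<12}" if "x \<in> {0..<12}" for x
  proof (cases "x = 0")
    case True then show ?thesis using \<open>\<sigma> 0 = 0\<close> by simp
  next
    case False then have "x \<in> {1..11}" using that by auto
    then have "\<sigma> x \<in> {1..11}" using p by (metis permutes_in_image)
    then show ?thesis by auto
  qed
  then have "t \<subseteq> {0..<12}" using s t by (auto simp: T7_def)
  moreover have "0 \<in> t" using s t \<open>\<sigma> 0 = 0\<close> by (force simp: T7_def)
  moreover have "card t = 7" using s t inj by (simp add: T7_def card_image inj_on_subset)
  moreover have "card (t \<inter> B i) = card (s \<inter> B i)" if "i < d" for i
  proof -
    have "t \<inter> B i = \<sigma> ` (s \<inter> B i)" using t pB[OF that] inj by (simp add: image_Int)
    then show ?thesis using inj by (simp add: card_image inj_on_subset)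
  qed
  ultimately show "t \<in> fib (cnt s)" by (simp add: fib_def T7_def cnt_eq)
next
  fix t assume "t \<in> fib (cnt s)"
  then have t: "t \<in> T7" and ct: "\<And>i. i < d \<Longrightarrow> card (t \<inter> B i) = card (s \<inter> B i)"
    by (auto simp: fib_def cnt_eq)
  have "\<forall>i. \<exists>p. i < d \<longrightarrow> p permutes B i \<and> p ` (s \<inter> B i) = t \<inter> B i"
  proof
    fix i
    show "\<exists>p. i < d \<longrightarrow> p permutes B i \<and> p ` (s \<inter> B i) = t \<inter> B i"
    proof (cases "i < d")
      case True
      then show ?thesis using perm_extend[OF B_fin[OF True] inf_le2 inf_le2 ct[OF True, symmetric]] by blast
    qed simp
  qed
  then obtain p where p0: "\<forall>i. i < d \<longrightarrow> p i permutes B i \<and> p i ` (s \<inter> B i) = t \<inter> B i"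
    by (rule choice[THEN exE])
  then have p: "\<And>i. i < d \<Longrightarrow> p i permutes B i \<and> p i ` (s \<inter> B i) = t \<inter> B i" by blast
  define \<sigma> where "\<sigma> x = (if \<exists>i<d. x \<in> B i then p (SOME i. i < d \<and> x \<in> B i) x else x)" for x
  have \<sigma>p: "\<sigma> x = p i x" if "i < d" "x \<in> B i" for i x
  proof -
    have "(SOME i. i < d \<and> x \<in> B i) = i"
    proof (rule some_equality)
      show "i < d \<and> x \<in> B i" using that by simp
    next
      fix j assume "j < d \<and> x \<in> B j"
      then show "j = i" using that disj[of i j] by blast
    qed
    then show ?thesis using that unfolding \<sigma>_def by auto
  qed
  have \<sigma>B: "\<sigma> ` B i = B i" if "i < d" for i
  proof -
    have "\<sigma> ` B i = p i ` B i" by (rule image_cong[OF refl]) (rule \<sigma>p[OF that])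
    then show ?thesis using p[OF that] permutes_image by metis
  qed
  have out: "\<sigma> x = x" if "x \<notin> {1..11}" for x
  proof -
    have "\<not> (\<exists>i<d. x \<in> B i)" using that B_sub by blast
    then show ?thesis unfolding \<sigma>_def by (simp only: if_False)
  qed
  have inB: "\<sigma> x \<in> B i" if "i < d" "x \<in> B i" for i x
    using \<sigma>B that by blast
  have "inj_on \<sigma> {1..11}"
  proof (rule inj_onI)
    fix x y assume xy: "x \<in> {1..11}" "y \<in> {1..11}" "\<sigma> x = \<sigma> y"
    have "x \<in> (\<Union>i<d. B i)" "y \<in> (\<Union>i<d. B i)" using xy(1,2) cover by simp_all
    then obtain i j where ij: "i < d" "j < d" "x \<in> B i" "y \<in> B j" by blast
    have sx: "\<sigma> x \<in> B i" and sy: "\<sigma> y \<in> B j" using inB ij by auto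
    have "i = j"
    proof (rule ccontr)
      assume "i \<noteq> j"
      then have "B i \<inter> B j = {}" by (rule disj[OF ij(1,2)])
      then show False using sx sy xy(3) by (metis disjoint_iff)
    qed
    then have "p i x = p i y" using ij xy(3) \<sigma>p by metis
    moreover have "inj (p i)" using p[OF ij(1)] permutes_inj by blast
    ultimately show "x = y" by (simp add: inj_eq)
  qed
  moreover have "\<sigma> ` {1..11} \<subseteq> {1..11}"
  proof
    fix y assume "y \<in> \<sigma> ` {1..11}"
    then obtain x where x: "x \<in> {1..11}" "y = \<sigma> x" by blast
    then have "x \<in> (\<Union>i<d. B i)" using cover by simp
    then obtain i where "i < d" "x \<in> B i" by blast
    then show "y \<in> {1..11}" using x inB B_sub by blast
  qed
  ultimately have "\<sigma> ` {1..11} = {1..11}" by (intro endo_inj_surj) auto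
  then have "bij_betw \<sigma> {1..11} {1..11}" using \<open>inj_on \<sigma> {1..11}\<close> by (simp add: bij_betw_def)
  then have "\<sigma> permutes {1..11}" using out by (intro bij_imp_permutes) auto
  then have "\<sigma> \<in> H" using \<sigma>B by (simp add: H_def)
  moreover have "\<sigma> ` s = t"
  proof -
    have sd: "s = insert 0 (\<Union>i<d. s \<inter> B i)" using s by (intro decomp) (auto simp: T7_def)
    have td: "t = insert 0 (\<Union>i<d. t \<inter> B i)" using t by (intro decomp) (auto simp: T7_def)
    have "\<sigma> ` (s \<inter> B i) = t \<inter> B i" if "i < d" for i
    proof -
      have "\<sigma> ` (s \<inter> B i) = p i ` (s \<inter> B i)" by (rule image_cong[OF refl]) (use \<sigma>p[OF that] in blast)
      then show ?thesis using p that by simp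
    qed
    then have "\<sigma> ` s = insert (\<sigma> 0) (\<Union>i<d. t \<inter> B i)" by (subst sd) auto
    also have "\<sigma> 0 = 0" using out by simp
    finally show ?thesis using td by (rule trans[OF _ sym])
  qed
  ultimately show "t \<in> orbit set_act H s" by (auto simp: orbit_def set_act_def)
qed

lemma card_fib:
  assumes ks: "ks \<in> tup"
  shows "card (fib ks) = bp ks"
proof -
  define P where "P = (\<Pi>\<^sub>E i\<in>{..<d}. {X. X \<subseteq> B i \<and> card X = ks ! i})"
  define r where "r t = (\<lambda>i\<in>{..<d}. t \<inter> B i)" for t
  have "inj_on r (fib ks)"
  proof (rule inj_onI)
    fix t u assume tu: "t \<in> fib ks" "u \<in> fib ks" "r t = r u"
    then have "\<forall>i<d. t \<inter> B i = u \<inter> B i" unfolding r_def by (metis lessThan_iff restrict_apply')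
    moreover have "t = insert 0 (\<Union>i<d. t \<inter> B i)"
      by (rule decomp) (use tu in \<open>auto simp: fib_def T7_def\<close>)
    moreover have "u = insert 0 (\<Union>i<d. u \<inter> B i)"
      by (rule decomp) (use tu in \<open>auto simp: fib_def T7_def\<close>)
    ultimately show "t = u" by (metis (no_types, lifting) SUP_cong lessThan_iff)
  qed
  moreover have "r ` fib ks = P"
  proof safe
    fix t assume "t \<in> fib ks"
    then show "r t \<in> P" unfolding P_def r_def fib_def cnt_def by auto
  next
    fix F assume F: "F \<in> P"
    define u where "u = insert 0 (\<Union>i<d. F i)"
    have Fs: "\<And>i. i < d \<Longrightarrow> F i \<subseteq> B i" using F by (auto simp: P_def)
    note b = build[of F, folded u_def, OF Fs]
    have "cnt u = ks" using ks b(3) F unfolding cnt_def tup_def P_def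
      by (auto simp: list_eq_iff_nth_eq)
    moreover have "card u = 7"
    proof -
      have "(\<Sum>i<d. card (F i)) = (\<Sum>i<d. ks ! i)" using F by (intro sum.cong) (auto simp: P_def)
      also have "\<dots> = sum_list ks" using ks by (simp add: tup_def sum_list_sum_nth atLeast0LessThan)
      finally show ?thesis using b(4) ks by (simp add: tup_def)
    qed
    ultimately have "u \<in> fib ks" using b(1,2) by (auto simp: T7_def fib_def)
    moreover have "r u = F"
    proof
      fix i show "r u i = F i"
        using b(3) F by (cases "i < d") (auto simp: r_def P_def PiE_def extensional_def)
    qed
    ultimately show "F \<in> r ` fib ks" by blast
  qed
  ultimately have "card (fib ks) = card P" by (metis card_image)
  also have "\<dots> = bp ks" unfolding P_def bp_def
    by (simp add: card_PiE n_subsets B_fin)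
  finally show ?thesis .
qed


lemma finite_T7: "finite T7"
proof -
  have "T7 \<subseteq> Pow {0..<12}" by (auto simp: T7_def)
  then show ?thesis using finite_subset by blast
qed

lemma finite_tup: "finite tup" using cnt_image finite_T7 by (metis finite_imageI)

lemma fib_orbits: "orbits set_act H T7 = fib ` tup"
proof -
  have "orbits set_act H T7 = (\<lambda>s. fib (cnt s)) ` T7"
    unfolding orbits_def using orbit_char by (simp cong: image_cong)
  also have "\<dots> = fib ` cnt ` T7" by (simp add: image_image)
  finally show ?thesis using cnt_image by simp
qed

lemma inj_fib: "inj_on fib tup"
proof (rule inj_onI)
  fix ks ks' assume a: "ks \<in> tup" "ks' \<in> tup" "fib ks = fib ks'"
  then obtain s where "s \<in> T7" "cnt s = ks" by (metis a(1) cnt_image imageE)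
  then have "s \<in> fib ks" by (simp add: fib_def)
  then have "s \<in> fib ks'" using a(3) by simp
  then show "ks = ks'" using \<open>cnt s = ks\<close> by (simp add: fib_def)
qed

lemma sum_T7:
  "(\<Sum>s\<in>T7. h (card (orbit set_act H s))) = (\<Sum>ks\<in>tup. of_nat (bp ks) * h (bp ks))"
proof -
  have "(\<Sum>s\<in>T7. h (card (orbit set_act H s))) = (\<Sum>s\<in>T7. h (bp (cnt s)))"
  proof (rule sum.cong[OF refl])
    fix s assume s: "s \<in> T7"
    then have "cnt s \<in> tup" using cnt_image by blast
    then show "h (card (orbit set_act H s)) = h (bp (cnt s))" using orbit_char[OF s] card_fib by simp
  qed
  also have "\<dots> = (\<Sum>ks\<in>tup. \<Sum>s\<in>{s \<in> T7. cnt s = ks}. h (bp (cnt s)))"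
    using finite_T7 finite_tup cnt_image by (intro sum.group[symmetric]) auto
  also have "\<dots> = (\<Sum>ks\<in>tup. of_nat (bp ks) * h (bp ks))"
  proof (rule sum.cong[OF refl])
    fix ks assume "ks \<in> tup"
    have "(\<Sum>s\<in>{s \<in> T7. cnt s = ks}. h (bp (cnt s))) = (\<Sum>s\<in>fib ks. h (bp ks))"
      by (simp add: fib_def)
    also have "\<dots> = of_nat (card (fib ks)) * h (bp ks)" by simp
    finally show "(\<Sum>s\<in>{s \<in> T7. cnt s = ks}. h (bp (cnt s))) = of_nat (bp ks) * h (bp ks)"
      using card_fib \<open>ks \<in> tup\<close> by simp
  qed
  finally show ?thesis .
qed

end

lemma card_T7: "card T7 = 462"
proof -
  have "T7 = insert 0 ` {X. X \<subseteq> {1..11} \<and> card X = 6}"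
  proof safe
    fix s assume s: "s \<in> T7"
    then have "s - {0} \<subseteq> {1..11}" "card (s - {0}) = 6" "s = insert 0 (s - {0})"
      by (auto simp: T7_def)
    then show "s \<in> insert 0 ` {X. X \<subseteq> {1..11} \<and> card X = 6}" by blast
  next
    fix X :: "nat set" assume X: "X \<subseteq> {1..11}" "card X = 6"
    then have "finite X" "0 \<notin> X" using finite_subset by auto
    then show "insert 0 X \<in> T7" using X by (auto simp: T7_def)
  qed
  moreover have "inj_on (insert 0) {X. X \<subseteq> {1..11::nat} \<and> card X = 6}"
    unfolding inj_on_def
  proof (intro ballI impI)
    fix X Y :: "nat set" assume a: "X \<in> {X. X \<subseteq> {1..11} \<and> card X = 6}" "Y \<in> {X. X \<subseteq> {1..11} \<and> card X = 6}"
      "insert 0 X = insert 0 Y"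
    have "0 \<notin> X" "0 \<notin> Y" using a(1,2) by auto
    then show "X = Y" using a(3) by (metis Diff_insert_absorb)
  qed
  ultimately have "card T7 = card {X. X \<subseteq> {1..11::nat} \<and> card X = 6}"
    by (metis card_image)
  also have "\<dots> = card {1..11::nat} choose 6" by (rule n_subsets) simp
  also have "card {1..11::nat} = 11" by simp
  also have "(11::nat) choose 6 = 462" by (simp add: numeral_eq_Suc)
  finally show ?thesis .
qed


lemma powr_succ: "(x::real) \<ge> 0 \<Longrightarrow> x * x powr t = x powr (t + 1)"
  by (cases "x = 0") (auto simp: powr_add)

lemma (in part) main:
  shows "(image_mset card (mset_set (orbits set_act H T7)) = image_mset bp (mset_set tup))
     \<and> (\<forall>t::real. t \<noteq> 0 \<longrightarrow> orb_t set_act H T7 t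
           = ((1 / 462) * (\<Sum>ks\<in>tup. real (bp ks) powr (t + 1))) powr (1 / t))
     \<and> (orb_inf set_act H T7 = Max (bp ` tup))
     \<and> (\<forall>t::real. t \<noteq> 0 \<longrightarrow> diam_t set_act H T7 t
           = real (Max (bp ` tup))
             / ((1 / 462) * (\<Sum>ks\<in>tup. real (bp ks) powr (t + 1))) powr (1 / t))
     \<and> (card T7 = 462)
     \<and> ((462::nat) = 11 choose 6)
     \<and> ((462::nat) = (\<Sum>ks\<in>tup. bp ks))
     \<and> (card (orbits set_act H T7) = card tup)"
proof -
  have A: "image_mset card (mset_set (orbits set_act H T7)) = image_mset bp (mset_set tup)"
  proof -
    have "mset_set (orbits set_act H T7) = image_mset fib (mset_set tup)"
      unfolding fib_orbits by (rule image_mset_mset_set[OF inj_fib, symmetric])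
    then have "image_mset card (mset_set (orbits set_act H T7)) = image_mset (card \<circ> fib) (mset_set tup)"
      by (simp add: image_mset.compositionality)
    also have "\<dots> = image_mset bp (mset_set tup)"
      by (rule image_mset_cong) (simp add: card_fib finite_tup)
    finally show ?thesis .
  qed
  have Bt: "orb_t set_act H T7 t = ((1 / 462) * (\<Sum>ks\<in>tup. real (bp ks) powr (t + 1))) powr (1 / t)" for t
  proof -
    have "(\<Sum>s\<in>T7. real (card (orbit set_act H s)) powr t) = (\<Sum>ks\<in>tup. real (bp ks) * real (bp ks) powr t)"
      by (rule sum_T7)
    also have "\<dots> = (\<Sum>ks\<in>tup. real (bp ks) powr (t + 1))"
      by (intro sum.cong refl powr_succ) simp
    finally show ?thesis unfolding orb_t_def card_T7 by simp
  qed
  have C: "orb_inf set_act H T7 = Max (bp ` tup)"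
  proof -
    have "(\<lambda>s. card (orbit set_act H s)) ` T7 = bp ` cnt ` T7"
    proof -
      have "(\<lambda>s. card (orbit set_act H s)) ` T7 = (\<lambda>s. bp (cnt s)) ` T7"
      proof (rule image_cong[OF refl])
        fix s assume s: "s \<in> T7"
        then have "cnt s \<in> tup" using cnt_image by blast
        then show "card (orbit set_act H s) = bp (cnt s)" using orbit_char[OF s] card_fib by simp
      qed
      then show ?thesis by (simp add: image_image)
    qed
    then show ?thesis unfolding orb_inf_def cnt_image by simp
  qed
  have S: "(462::nat) = (\<Sum>ks\<in>tup. bp ks)"
  proof -
    have "(\<Sum>s\<in>T7. (\<lambda>n. 1::nat) (card (orbit set_act H s))) = (\<Sum>ks\<in>tup. of_nat (bp ks) * (\<lambda>n. 1::nat) (bp ks))"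
      by (rule sum_T7)
    then show ?thesis using card_T7 by simp
  qed
  have E: "card (orbits set_act H T7) = card tup"
    unfolding fib_orbits by (rule card_image[OF inj_fib])
  have F: "(11::nat) choose 6 = 462" by (simp add: numeral_eq_Suc)
  show ?thesis using A Bt C S E F card_T7 by (simp add: diam_t_def)
qed


theorem proposition5p1:
  fixes ns :: "nat list" and G :: "(nat \<Rightarrow> nat) set"
  assumes "ns \<noteq> []" and "\<forall>n \<in> set ns. n > 0" and "sum_list ns = 11"
    and "max_tt_group ns G"
  shows "(image_mset card (mset_set (orbits set_act G T7))
           = image_mset (binprod ns) (mset_set (tuples ns)))
     \<and> (\<forall>t::real. t \<noteq> 0 \<longrightarrow> orb_t set_act G T7 t
           = ((1 / 462) * (\<Sum>ks\<in>tuples ns. real (binprod ns ks) powr (t + 1))) powr (1 / t))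
     \<and> (orb_inf set_act G T7 = Max (binprod ns ` tuples ns))
     \<and> (\<forall>t::real. t \<noteq> 0 \<longrightarrow> diam_t set_act G T7 t
           = real (Max (binprod ns ` tuples ns))
             / ((1 / 462) * (\<Sum>ks\<in>tuples ns. real (binprod ns ks) powr (t + 1))) powr (1 / t))
     \<and> (card T7 = 462)
     \<and> ((462::nat) = 11 choose 6)
     \<and> ((462::nat) = (\<Sum>ks\<in>tuples ns. binprod ns ks))
     \<and> (card (orbits set_act G T7) = card (tuples ns))"
proof -
  obtain \<tau> where \<tau>S: "\<tau> \<in> S11" and G: "G = conj_grp \<tau> (young ns)"
    using assms(4) unfolding max_tt_group_def by blast
  have \<tau>: "\<tau> permutes {1..11}" using \<tau>S by (simp add: S11_def)
  have inj\<tau>: "inj \<tau>" using \<tau> permutes_inj by blast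
  define B where "B i = \<tau> ` block ns i" for i
  interpret part "length ns" B
  proof
    fix i j assume "i < length ns" "j < length ns" "i \<noteq> j"
    then have "block ns i \<inter> block ns j = {}" by (rule block_disj)
    then show "B i \<inter> B j = {}" unfolding B_def using inj\<tau> by (simp add: image_Int[symmetric])
  next
    have "(\<Union>i<length ns. B i) = \<tau> ` (\<Union>i<length ns. block ns i)" unfolding B_def by (simp add: image_UN)
    also have "\<dots> = \<tau> ` {1..11}" using block_union[of ns] assms(3) by simp
    also have "\<dots> = {1..11}" using \<tau> by (rule permutes_image)
    finally show "(\<Union>i<length ns. B i) = {1..11}" .
  qed
  have cardB: "card (B i) = ns ! i" for i
    unfolding B_def using inj\<tau> by (simp add: card_image inj_on_subset card_block)
  have tup_eq: "tuples ns = tup" unfolding tuples_def tup_def cardB by simp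
  have bp_eq: "binprod ns = bp" unfolding binprod_def bp_def cardB by (rule ext) simp
  have inv1: "inv \<tau> \<circ> \<tau> = id" and inv2: "\<tau> \<circ> inv \<tau> = id" using \<tau> permutes_inv_o by blast+
  have GH: "G = H"
  proof safe
    fix g assume "g \<in> G"
    then obtain \<sigma> where g: "g = \<tau> \<circ> \<sigma> \<circ> inv \<tau>" and \<sigma>: "\<sigma> \<in> young ns"
      unfolding G conj_grp_def by blast
    have \<sigma>p: "\<sigma> permutes {1..11}" and \<sigma>b: "\<And>i. i < length ns \<Longrightarrow> \<sigma> ` block ns i = block ns i"
      using \<sigma> by (auto simp: young_def S11_def)
    have "g permutes {1..11}" unfolding g
      by (intro permutes_compose permutes_inv \<tau> \<sigma>p)
    moreover have "g ` B i = B i" if "i < length ns" for i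
    proof -
      have "g ` B i = \<tau> ` \<sigma> ` (inv \<tau> ` \<tau> ` block ns i)" unfolding g B_def by (simp add: image_comp)
      also have "inv \<tau> ` \<tau> ` block ns i = block ns i" by (simp add: image_comp inv1)
      finally show ?thesis using \<sigma>b[OF that] by (simp add: B_def)
    qed
    ultimately show "g \<in> H" by (simp add: H_def)
  next
    fix g assume "g \<in> H"
    then have gp: "g permutes {1..11}" and gb: "\<And>i. i < length ns \<Longrightarrow> g ` B i = B i"
      by (auto simp: H_def)
    define \<sigma> where "\<sigma> = inv \<tau> \<circ> g \<circ> \<tau>"
    have "\<sigma> permutes {1..11}" unfolding \<sigma>_def
      by (intro permutes_compose permutes_inv \<tau> gp)
    moreover have "\<sigma> ` block ns i = block ns i" if "i < length ns" for i
    proof -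
      have "\<sigma> ` block ns i = inv \<tau> ` (g ` B i)" unfolding \<sigma>_def B_def by (simp add: image_comp)
      also have "\<dots> = inv \<tau> ` \<tau> ` block ns i" using gb[OF that] by (simp add: B_def)
      also have "\<dots> = block ns i" by (simp add: image_comp inv1)
      finally show ?thesis .
    qed
    ultimately have "\<sigma> \<in> young ns" by (simp add: young_def S11_def)
    moreover have "g = \<tau> \<circ> \<sigma> \<circ> inv \<tau>"
      unfolding \<sigma>_def using permutes_inverses[OF \<tau>] by (simp add: fun_eq_iff)
    ultimately show "g \<in> G" unfolding G conj_grp_def by blast
  qed
  show ?thesis unfolding GH tup_eq bp_eq by (rule main)
qed

end
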